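(* Let $D$ be a regular $(v,k,\lambda,\mu)$-PDS in a finite group $G$ with $0<\mu<k$ and $\sqrt\Delta\in\mathbb{Z}$. Let $H$ be a nontrivial subgroup of the group of linear characters of $G$ all of whose elements have order coprime to $\sqrt\Delta$, let $N=\bigcap_{\xi\in H}\ker\xi$, and let $\theta_\alpha$ denote the common value $\xi(D)$ of the nonprincipal $\xi\in H$. Then for every $a\in G\setminus N$, \[|Na\cap D|=\frac{k-\theta_\alpha}{|H|}.\]
   Context: A $(v,k,\lambda,\mu)$-PDS in a group $G$ of order $v$ is a $k$-subset $D$ such that every nonidentity element of $D$ is $xy^{-1}$ ($x,y\in D$) in exactly $\lambda$ ways and every nonidentity element of $G\setminus D$ in exactly $\mu$ ways; regular means $D=D^{(-1)}$ and $1\notin D$. $\Delta=(\lambda-\mu)^2+4(k-\mu)$. All nonprincipal characters in such an $H$ take the same value on $D$, where $\chi(D)=\sum_{d\in D}\chi(d)$. *)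

theory Defs
  imports "HOL-Algebra.Algebra" "HOL-Analysis.Analysis"
begin

definition pds_reps :: "('a, 'b) monoid_scheme \<Rightarrow> 'a set \<Rightarrow> 'a \<Rightarrow> nat" where
  "pds_reps G D g = card {(x, y). x \<in> D \<and> y \<in> D \<and> x \<otimes>\<^bsub>G\<^esub> inv\<^bsub>G\<^esub> y = g}"

definition is_PDS :: "('a, 'b) monoid_scheme \<Rightarrow> 'a set \<Rightarrow> nat \<Rightarrow> nat \<Rightarrow> nat \<Rightarrow> nat \<Rightarrow> bool" where
  "is_PDS G D v k lam mu \<longleftrightarrow>
     D \<subseteq> carrier G \<and> card (carrier G) = v \<and> card D = k \<and>
     (\<forall>g \<in> D. g \<noteq> \<one>\<^bsub>G\<^esub> \<longrightarrow> pds_reps G D g = lam) \<and>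
     (\<forall>g \<in> carrier G - D. g \<noteq> \<one>\<^bsub>G\<^esub> \<longrightarrow> pds_reps G D g = mu)"

definition regular_PDS :: "('a, 'b) monoid_scheme \<Rightarrow> 'a set \<Rightarrow> bool" where
  "regular_PDS G D \<longleftrightarrow> (\<lambda>d. inv\<^bsub>G\<^esub> d) ` D = D \<and> \<one>\<^bsub>G\<^esub> \<notin> D"

definition pds_Delta :: "nat \<Rightarrow> nat \<Rightarrow> nat \<Rightarrow> int" where
  "pds_Delta k lam mu = (int lam - int mu)^2 + 4 * (int k - int mu)"

text \<open>Linear characters: homomorphisms G -> C^*, normalised to 0 off the carrier
  so that they form a set of functions closed under pointwise product.\<close>
definition lin_chars :: "('a, 'b) monoid_scheme \<Rightarrow> ('a \<Rightarrow> complex) set" where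
  "lin_chars G = {c. (\<forall>x \<in> carrier G. c x \<noteq> 0) \<and>
      (\<forall>x \<in> carrier G. \<forall>y \<in> carrier G. c (x \<otimes>\<^bsub>G\<^esub> y) = c x * c y) \<and>
      (\<forall>x. x \<notin> carrier G \<longrightarrow> c x = 0)}"

definition principal_char :: "('a, 'b) monoid_scheme \<Rightarrow> 'a \<Rightarrow> complex" where
  "principal_char G = (\<lambda>x. if x \<in> carrier G then 1 else 0)"

definition char_group :: "('a, 'b) monoid_scheme \<Rightarrow> ('a \<Rightarrow> complex) monoid" where
  "char_group G = \<lparr> carrier = lin_chars G, monoid.mult = (\<lambda>c d x. c x * d x),
                     one = principal_char G \<rparr>"

definition char_ord :: "('a, 'b) monoid_scheme \<Rightarrow> ('a \<Rightarrow> complex) \<Rightarrow> nat" where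
  "char_ord G c = (LEAST n. 0 < n \<and> (\<forall>x \<in> carrier G. c x ^ n = 1))"

definition char_sum :: "('a \<Rightarrow> complex) \<Rightarrow> 'a set \<Rightarrow> complex" where
  "char_sum c D = (\<Sum>d \<in> D. c d)"

end

theory Submission imports Defs "HOL-Number_Theory.Number_Theory" begin


inductive_set zspan :: "complex set \<Rightarrow> complex set" for U where
  zs_base: "u \<in> U \<Longrightarrow> u \<in> zspan U"
| zs_zero: "0 \<in> zspan U"
| zs_add: "x \<in> zspan U \<Longrightarrow> y \<in> zspan U \<Longrightarrow> x + y \<in> zspan U"
| zs_neg: "x \<in> zspan U \<Longrightarrow> - x \<in> zspan U"

lemma zs_sum: "finite S \<Longrightarrow> (\<And>i. i \<in> S \<Longrightarrow> f i \<in> zspan U) \<Longrightarrow> sum f S \<in> zspan U"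
  by (induction S rule: finite_induct) (auto intro: zspan.intros)

lemma zs_of_nat_mult: "x \<in> zspan U \<Longrightarrow> of_nat n * x \<in> zspan U"
  by (induction n) (auto simp: algebra_simps intro: zspan.intros)

lemma zs_mult:
  assumes cl: "\<And>u v. u \<in> U \<Longrightarrow> v \<in> U \<Longrightarrow> u * v \<in> U"
    and x: "x \<in> zspan U" and y: "y \<in> zspan U"
  shows "x * y \<in> zspan U"
  using x
proof induct
  case (zs_base u)
  show ?case using y
    by induct (auto simp: algebra_simps intro: zspan.intros cl zs_base)
next
  case zs_zero then show ?case by (auto intro: zspan.intros)
next
  case (zs_add x1 x2) then show ?case by (auto simp: algebra_simps intro: zspan.intros)
next
  case (zs_neg x) then show ?case by (auto intro: zspan.intros)
qed

lemma zs_pow: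
  assumes cl: "\<And>u v. u \<in> U \<Longrightarrow> v \<in> U \<Longrightarrow> u * v \<in> U" and one: "1 \<in> U"
    and x: "x \<in> zspan U"
  shows "x ^ n \<in> zspan U"
  by (induction n) (auto intro: zs_base one zs_mult[OF cl] x)

lemma rat_pow_int:
  fixes q :: rat and M :: int
  assumes M: "M \<noteq> 0" and h: "\<And>j. of_int M * q ^ j \<in> \<int>"
  shows "q \<in> \<int>"
proof -
  obtain a b where qa: "quotient_of q = (a, b)" by (cases "quotient_of q") auto
  have b0: "b > 0" using quotient_of_denom_pos[OF qa] .
  have cop: "coprime a b" using quotient_of_coprime[OF qa] .
  have q: "q = of_int a / of_int b" using quotient_of_div[OF qa] .
  have bd: "b ^ j dvd M" for j
  proof -
    obtain c where c: "of_int M * q ^ j = of_int c" using h[of j] by (auto elim: Ints_cases)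
    have "of_int M * (of_int a ^ j / of_int b ^ j) = (of_int c :: rat)"
      using c unfolding q by (simp only: power_divide)
    moreover have bj: "(of_int b ^ j :: rat) \<noteq> 0" using b0 by simp
    ultimately have "of_int M * of_int a ^ j = (of_int c * of_int b ^ j :: rat)"
      by (simp add: divide_eq_eq mult.assoc[symmetric] del: of_int_power)
    then have "M * a ^ j = c * b ^ j" by (metis of_int_eq_iff of_int_mult of_int_power)
    then have "b ^ j dvd M * a ^ j" by simp
    moreover have "coprime (b ^ j) (a ^ j)" using cop by (simp add: coprime_commute)
    ultimately show ?thesis using coprime_dvd_mult_left_iff by blast
  qed
  have "b = 1"
  proof (rule ccontr)
    assume "b \<noteq> 1"
    then have b2: "b \<ge> 2" using b0 by simp
    define j where "j = nat \<bar>M\<bar>"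
    have jM: "int j = \<bar>M\<bar>" unfolding j_def by simp
    have f1: "\<bar>b ^ j\<bar> \<le> \<bar>M\<bar>" by (rule dvd_imp_le_int[OF M bd])
    have f2: "(2::int) ^ j \<le> b ^ j" using b2 by (intro power_mono) auto
    have f3: "int j < 2 ^ j" by (rule of_nat_less_two_power)
    have "b ^ j > 0" using b0 by simp
    with f1 f2 f3 jM show False by linarith
  qed
  then show ?thesis using q by simp
qed

lemma exists_rat_functional:
  "\<exists>L::complex \<Rightarrow> rat. (\<forall>x y. L (x + y) = L x + L y) \<and> (\<forall>r x. L (of_rat r * x) = r * L x) \<and> L 1 = 1"
proof -
  interpret V1: vector_space "\<lambda>(r::rat) (x::complex). of_rat r * x"
    by unfold_locales (auto simp: algebra_simps of_rat_add of_rat_mult)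
  interpret V2: vector_space "(*) :: rat \<Rightarrow> rat \<Rightarrow> rat"
    by unfold_locales (auto simp: algebra_simps)
  interpret VP: vector_space_pair "\<lambda>(r::rat) (x::complex). of_rat r * x" "(*) :: rat \<Rightarrow> rat \<Rightarrow> rat" ..
  have "V1.independent {1}" by simp
  from VP.linear_independent_extend[OF this, of "\<lambda>_. 1"] obtain L where
    L: "Vector_Spaces.linear (\<lambda>(r::rat) (x::complex). of_rat r * x) (*) L" "L 1 = 1" by auto
  then show ?thesis by (auto simp: Vector_Spaces.linear_iff)
qed

lemma zspan_rat_int:
  assumes fin: "finite U" and one: "1 \<in> U" and cl: "\<And>u v. u \<in> U \<Longrightarrow> v \<in> U \<Longrightarrow> u * v \<in> U"
    and x: "x \<in> zspan U" and xq: "x = of_rat q"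
  shows "q \<in> \<int>"
proof -
  obtain L :: "complex \<Rightarrow> rat" where Ladd: "\<And>x y. L (x + y) = L x + L y"
    and Lsc: "\<And>r x. L (of_rat r * x) = r * L x" and L1: "L 1 = 1"
    using exists_rat_functional by blast
  have L0: "L 0 = 0" using Ladd[of 0 0] by simp
  have Lneg: "L (- y) = - L y" for y using Ladd[of "-y" y] L0 by (simp add: eq_neg_iff_add_eq_0)
  define den where "den u = snd (quotient_of (L u))" for u
  define M where "M = (\<Prod>u\<in>U. den u)"
  have denpos: "den u > 0" for u unfolding den_def
    by (metis prod.collapse quotient_of_denom_pos)
  have M0: "M \<noteq> 0" unfolding M_def using denpos fin by (simp add: prod_zero_iff) (metis less_irrefl)
  have Mu: "of_int M * L u \<in> \<int>" if u: "u \<in> U" for u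
  proof -
    obtain a where qa: "quotient_of (L u) = (a, den u)" unfolding den_def by (metis prod.collapse)
    have "L u = of_int a / of_int (den u)" using quotient_of_div[OF qa] .
    moreover have "M = den u * (\<Prod>v\<in>U - {u}. den v)" unfolding M_def using fin u by (simp add: prod.remove)
    ultimately have "of_int M * L u = of_int (a * (\<Prod>v\<in>U - {u}. den v))"
      using denpos[of u] by (simp add: field_simps)
    then show ?thesis by (metis Ints_of_int)
  qed
  have My: "of_int M * L y \<in> \<int>" if "y \<in> zspan U" for y
    using that
  proof induct
    case (zs_base u) then show ?case using Mu by blast
  next
    case zs_zero then show ?case by (simp add: L0)
  next
    case (zs_add x y) then show ?case by (simp add: Ladd distrib_left)
  next
    case (zs_neg x) then show ?case by (simp add: Lneg)
  qed
  have "of_int M * q ^ j \<in> \<int>" for j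
  proof -
    have "x ^ j \<in> zspan U" using zs_pow[OF cl one x] by blast
    moreover have "L (x ^ j) = q ^ j" using Lsc[of "q ^ j" 1] L1 by (simp add: xq of_rat_power)
    ultimately show ?thesis using My by metis
  qed
  then show ?thesis using rat_pow_int[OF M0] by blast
qed

lemma zspan_div_int:
  assumes fin: "finite U" and one: "1 \<in> U" and cl: "\<And>u v. u \<in> U \<Longrightarrow> v \<in> U \<Longrightarrow> u * v \<in> U"
    and r: "r \<in> zspan U" and eq: "of_int t = of_int p * r" and p: "p \<noteq> 0"
  shows "p dvd t"
proof -
  have "r = of_rat (of_int t / of_int p)" using eq p by (simp add: of_rat_divide field_simps)
  from zspan_rat_int[OF fin one cl r this] obtain c where "of_int t / of_int p = (of_int c :: rat)"
    by (auto elim: Ints_cases)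
  then have "t = c * p" using p by (simp add: field_simps) (metis of_int_eq_iff of_int_mult)
  then show ?thesis by simp
qed

lemma frob_two:
  assumes cl: "\<And>u v. u \<in> U \<Longrightarrow> v \<in> U \<Longrightarrow> u * v \<in> U" and one: "1 \<in> U"
    and a: "a \<in> zspan U" and b: "b \<in> zspan U" and p: "Factorial_Ring.prime (p::nat)"
  shows "\<exists>r\<in>zspan U. (a + b) ^ p = a ^ p + b ^ p + of_nat p * r"
proof -
  have p0: "p > 0" using p prime_gt_0_nat by blast
  define t where "t k = of_nat (p choose k) * a ^ k * b ^ (p - k)" for k
  have "{..p} = insert 0 (insert p {1..<p})" by auto
  then have "(a + b) ^ p = t 0 + (t p + (\<Sum>k\<in>{1..<p}. t k))"
    unfolding binomial_ring t_def[symmetric] using p0 by (simp add: sum.insert)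
  moreover have "t 0 = b ^ p" "t p = a ^ p" unfolding t_def by auto
  ultimately have e: "(a + b) ^ p = a ^ p + b ^ p + (\<Sum>k\<in>{1..<p}. t k)" by simp
  define r where "r = (\<Sum>k\<in>{1..<p}. of_nat ((p choose k) div p) * (a ^ k * b ^ (p - k)))"
  have "(\<Sum>k\<in>{1..<p}. t k) = of_nat p * r"
    unfolding r_def sum_distrib_left
  proof (rule sum.cong)
    fix k assume k: "k \<in> {1..<p}"
    have "p dvd (p choose k)" using k p0 p by (intro dvd_choose_prime) auto
    then have "(p choose k) = p * ((p choose k) div p)" by simp
    then show "t k = of_nat p * (of_nat ((p choose k) div p) * (a ^ k * b ^ (p - k)))"
      unfolding t_def by (metis (no_types, lifting) mult.assoc of_nat_mult)
  qed simp
  moreover have "r \<in> zspan U" unfolding r_def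
    by (intro zs_sum zs_of_nat_mult zs_mult[OF cl] zs_pow[OF cl one] a b) auto
  ultimately show ?thesis using e by auto
qed

lemma frob_sum:
  assumes cl: "\<And>u v. u \<in> U \<Longrightarrow> v \<in> U \<Longrightarrow> u * v \<in> U" and one: "1 \<in> U"
    and p: "Factorial_Ring.prime (p::nat)" and S: "finite S" and f: "\<And>d. d \<in> S \<Longrightarrow> f d \<in> zspan U"
  shows "\<exists>r\<in>zspan U. (\<Sum>d\<in>S. f d) ^ p - (\<Sum>d\<in>S. f d ^ p) = of_nat p * r"
  using S f
proof (induction S rule: finite_induct)
  case empty
  have "p > 0" using p prime_gt_0_nat by blast
  then show ?case by (intro bexI[of _ 0]) (auto intro: zs_zero)
next
  case (insert d S)
  obtain r1 where r1: "r1 \<in> zspan U" "(\<Sum>d\<in>S. f d) ^ p - (\<Sum>d\<in>S. f d ^ p) = of_nat p * r1"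
    using insert by auto
  have fd: "f d \<in> zspan U" using insert by auto
  have A: "(\<Sum>d\<in>S. f d) \<in> zspan U" using insert by (intro zs_sum) auto
  obtain r2 where r2: "r2 \<in> zspan U" "(f d + (\<Sum>d\<in>S. f d)) ^ p = f d ^ p + (\<Sum>d\<in>S. f d) ^ p + of_nat p * r2"
    using frob_two[OF cl one fd A p] by auto
  have "(\<Sum>d\<in>insert d S. f d) ^ p - (\<Sum>d\<in>insert d S. f d ^ p) = of_nat p * (r1 + r2)"
    using insert(1,2) r1(2) r2(2) by (simp add: algebra_simps)
  then show ?case using r1(1) r2(1) by (auto intro: zs_add)
qed

lemma fermat_int:
  fixes A :: int assumes p: "Factorial_Ring.prime (p::nat)"
  shows "[A ^ p = A] (mod int p)"
proof -
  define a where "a = nat (A mod int p)"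
  have p0: "p > 0" using p prime_gt_0_nat by blast
  have Aa: "[A = int a] (mod int p)" unfolding a_def using p0
    by (simp add: cong_def)
  have "[a ^ p = a] (mod p)"
  proof (cases "p dvd a")
    case True
    then have "[a = 0] (mod p)" by (simp add: cong_0_iff)
    then have "[a ^ p = 0 ^ p] (mod p)" by (rule cong_pow)
    moreover have "(0::nat) ^ p = 0" using p0 by simp
    ultimately show ?thesis using \<open>[a = 0] (mod p)\<close> by (metis cong_sym cong_trans)
  next
    case False
    have "[a ^ (p - 1) = 1] (mod p)" using fermat_theorem[OF p False] .
    then have "[a * a ^ (p - 1) = a * 1] (mod p)" by (rule cong_scalar_left)
    moreover have "a * a ^ (p - 1) = a ^ p" using p0 by (metis Suc_diff_1 power_Suc)
    ultimately show ?thesis by simp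
  qed
  then have "[int a ^ p = int a] (mod int p)" by (metis cong_int_iff of_nat_power)
  moreover have "[A ^ p = int a ^ p] (mod int p)" using Aa by (rule cong_pow)
  ultimately show ?thesis using Aa by (meson cong_sym cong_trans)
qed



definition cpow :: "('a,'b) monoid_scheme \<Rightarrow> ('a \<Rightarrow> complex) \<Rightarrow> nat \<Rightarrow> 'a \<Rightarrow> complex" where
  "cpow G c n = (\<lambda>x. if x \<in> carrier G then c x ^ n else 0)"

locale fgrp = group G for G (structure) +
  assumes fin: "finite (carrier G)"
begin

lemma ch_mult: "c \<in> lin_chars G \<Longrightarrow> x \<in> carrier G \<Longrightarrow> y \<in> carrier G \<Longrightarrow> c (x \<otimes> y) = c x * c y"
  by (simp add: lin_chars_def)
lemma ch_nz: "c \<in> lin_chars G \<Longrightarrow> x \<in> carrier G \<Longrightarrow> c x \<noteq> 0"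
  by (simp add: lin_chars_def)
lemma ch_out: "c \<in> lin_chars G \<Longrightarrow> x \<notin> carrier G \<Longrightarrow> c x = 0"
  by (simp add: lin_chars_def)
lemma ch_one: assumes "c \<in> lin_chars G" shows "c \<one> = 1"
proof -
  have "c \<one> = c \<one> * c \<one>" using ch_mult[OF assms, of \<one> \<one>] by simp
  with ch_nz[OF assms, of \<one>] show ?thesis by simp
qed
lemma ch_pow: "c \<in> lin_chars G \<Longrightarrow> x \<in> carrier G \<Longrightarrow> c (x [^] (n::nat)) = c x ^ n"
  by (induction n) (simp_all add: ch_one ch_mult)
lemma ch_inv: "c \<in> lin_chars G \<Longrightarrow> x \<in> carrier G \<Longrightarrow> c (inv x) * c x = 1"
  by (metis ch_mult ch_one inv_closed l_inv)
lemma order_pos: "Coset.order G > 0" using fin order_gt_0_iff_finite by blast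
lemma ch_root: "c \<in> lin_chars G \<Longrightarrow> x \<in> carrier G \<Longrightarrow> c x ^ Coset.order G = 1"
  using ch_pow[of c x "Coset.order G"] pow_order_eq_1[of x] ch_one[of c] by simp

definition "UU = {z::complex. z ^ Coset.order G = 1}"
lemma UU_fin: "finite UU" unfolding UU_def using order_pos finite_roots_unity[of "Coset.order G"] by simp
lemma UU_one: "1 \<in> UU" unfolding UU_def by simp
lemma UU_mult: "u \<in> UU \<Longrightarrow> v \<in> UU \<Longrightarrow> u * v \<in> UU" unfolding UU_def by (simp add: power_mult_distrib)
lemma ch_UU: "c \<in> lin_chars G \<Longrightarrow> x \<in> carrier G \<Longrightarrow> c x \<in> UU" unfolding UU_def using ch_root by simp

lemma lin_chars_fin: "finite (lin_chars G)"
proof -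
  have "lin_chars G \<subseteq> (\<lambda>f x. if x \<in> carrier G then f x else 0) ` (PiE (carrier G) (\<lambda>_. UU))"
  proof
    fix c assume c: "c \<in> lin_chars G"
    have "restrict c (carrier G) \<in> PiE (carrier G) (\<lambda>_. UU)" using ch_UU[OF c] by auto
    moreover have "c = (\<lambda>x. if x \<in> carrier G then restrict c (carrier G) x else 0)"
      using ch_out[OF c] by (auto simp: fun_eq_iff)
    ultimately show "c \<in> (\<lambda>f x. if x \<in> carrier G then f x else 0) ` (PiE (carrier G) (\<lambda>_. UU))" by blast
  qed
  moreover have "finite (PiE (carrier G) (\<lambda>_. UU))" using fin UU_fin by (intro finite_PiE) auto
  ultimately show ?thesis using finite_subset by blast
qed

lemma principal_lin: "principal_char G \<in> lin_chars G"
  by (simp add: lin_chars_def principal_char_def)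

lemma cpow_lin: "c \<in> lin_chars G \<Longrightarrow> cpow G c n \<in> lin_chars G"
  by (simp add: lin_chars_def cpow_def power_mult_distrib)

lemma cpow_0: "cpow G c 0 = principal_char G"
  by (auto simp: cpow_def principal_char_def fun_eq_iff)

lemma cpow_Suc: "c \<in> lin_chars G \<Longrightarrow> cpow G c (Suc n) = (\<lambda>x. c x * cpow G c n x)"
  by (auto simp: cpow_def fun_eq_iff ch_out)

lemma cpow_cpow: "cpow G (cpow G c a) b = cpow G c (a * b)"
  by (simp add: cpow_def fun_eq_iff power_mult)

lemma principal_iff: "c \<in> lin_chars G \<Longrightarrow> c = principal_char G \<longleftrightarrow> (\<forall>x\<in>carrier G. c x = 1)"
  by (auto simp: principal_char_def fun_eq_iff ch_out)

lemma cpow_principal_iff: "c \<in> lin_chars G \<Longrightarrow> cpow G c n = principal_char G \<longleftrightarrow> (\<forall>x\<in>carrier G. c x ^ n = 1)"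
  by (subst principal_iff[OF cpow_lin]) (auto simp: cpow_def)

lemma ord_props:
  assumes c: "c \<in> lin_chars G"
  shows "char_ord G c > 0" "\<forall>x\<in>carrier G. c x ^ char_ord G c = 1"
proof -
  have ex: "\<exists>n. 0 < n \<and> (\<forall>x\<in>carrier G. c x ^ n = 1)" using order_pos ch_root[OF c] by blast
  have "0 < char_ord G c \<and> (\<forall>x\<in>carrier G. c x ^ char_ord G c = 1)"
    unfolding char_ord_def by (rule LeastI_ex[OF ex])
  then show "char_ord G c > 0" "\<forall>x\<in>carrier G. c x ^ char_ord G c = 1" by auto
qed

lemma ord_dvd_iff:
  assumes c: "c \<in> lin_chars G"
  shows "(\<forall>x\<in>carrier G. c x ^ n = 1) \<longleftrightarrow> char_ord G c dvd n"
proof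
  assume "char_ord G c dvd n"
  then obtain t where "n = char_ord G c * t" by auto
  then show "\<forall>x\<in>carrier G. c x ^ n = 1" using ord_props(2)[OF c] by (simp add: power_mult)
next
  assume h: "\<forall>x\<in>carrier G. c x ^ n = 1"
  define od where "od = char_ord G c"
  have o0: "od > 0" using ord_props(1)[OF c] od_def by simp
  have r: "\<forall>x\<in>carrier G. c x ^ (n mod od) = 1"
  proof
    fix x assume x: "x \<in> carrier G"
    have "c x ^ n = c x ^ (od * (n div od) + n mod od)" by simp
    also have "\<dots> = (c x ^ od) ^ (n div od) * c x ^ (n mod od)" by (simp only: power_add power_mult)
    finally have "c x ^ n = (c x ^ od) ^ (n div od) * c x ^ (n mod od)" .
    then show "c x ^ (n mod od) = 1" using h x ord_props(2)[OF c] od_def by simp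
  qed
  have "n mod od = 0"
  proof (rule ccontr)
    assume "n mod od \<noteq> 0"
    then have "0 < n mod od \<and> (\<forall>x\<in>carrier G. c x ^ (n mod od) = 1)" using r by simp
    then have "od \<le> n mod od" unfolding od_def char_ord_def by (rule Least_le)
    moreover have "n mod od < od" using o0 by simp
    ultimately show False by simp
  qed
  then show "char_ord G c dvd n" using od_def by (simp add: mod_eq_0_iff_dvd)
qed

lemma ord_eqI:
  assumes c: "c \<in> lin_chars G" and d: "d > 0" and h: "\<And>n. (\<forall>x\<in>carrier G. c x ^ n = 1) \<longleftrightarrow> d dvd n"
  shows "char_ord G c = d"
proof (rule dvd_antisym)
  show "char_ord G c dvd d" using h[of d] ord_dvd_iff[OF c, of d] by simp
  show "d dvd char_ord G c" using h[of "char_ord G c"] ord_props(2)[OF c] by simp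
qed

lemma ord_cpow:
  assumes c: "c \<in> lin_chars G" and q: "q dvd char_ord G c" "q > 0"
  shows "char_ord G (cpow G c q) = char_ord G c div q"
proof (rule ord_eqI[OF cpow_lin[OF c]])
  obtain r where r: "char_ord G c = q * r" using q by auto
  show "char_ord G c div q > 0" using ord_props(1)[OF c] r q by auto
  fix n
  have "(\<forall>x\<in>carrier G. cpow G c q x ^ n = 1) \<longleftrightarrow> (\<forall>x\<in>carrier G. c x ^ (q * n) = 1)"
    by (simp add: cpow_def power_mult)
  also have "\<dots> \<longleftrightarrow> char_ord G c dvd q * n" by (rule ord_dvd_iff[OF c])
  also have "\<dots> \<longleftrightarrow> char_ord G c div q dvd n" using r q by auto
  finally show "(\<forall>x\<in>carrier G. cpow G c q x ^ n = 1) \<longleftrightarrow> char_ord G c div q dvd n" .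
qed

lemma ord1_iff:
  assumes c: "c \<in> lin_chars G"
  shows "c = principal_char G \<longleftrightarrow> char_ord G c = 1"
  using principal_iff[OF c] ord_dvd_iff[OF c, of 1] by simp

lemma sum_G_zero:
  assumes c: "c \<in> lin_chars G" and np: "c \<noteq> principal_char G"
  shows "(\<Sum>x\<in>carrier G. c x) = 0"
proof -
  obtain h where h: "h \<in> carrier G" "c h \<noteq> 1" using principal_iff[OF c] np by auto
  have inj: "inj_on (\<lambda>x. h \<otimes> x) (carrier G)" using h(1) by (auto simp: inj_on_def)
  have img: "(\<lambda>x. h \<otimes> x) ` carrier G = carrier G"
    using endo_inj_surj[OF fin _ inj] h(1) by auto
  have "(\<Sum>x\<in>carrier G. c x) = (\<Sum>x\<in>(\<lambda>x. h \<otimes> x) ` carrier G. c x)" using img by simp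
  also have "\<dots> = (\<Sum>x\<in>carrier G. c (h \<otimes> x))" using inj by (simp add: sum.reindex)
  also have "\<dots> = c h * (\<Sum>x\<in>carrier G. c x)" using h(1) by (simp add: ch_mult[OF c] sum_distrib_left)
  finally have "(1 - c h) * (\<Sum>x\<in>carrier G. c x) = 0" by (simp add: algebra_simps)
  then show ?thesis using h(2) by simp
qed

end

locale fgrp_sub = fgrp G for G (structure) +
  fixes H assumes sub: "subgroup H (char_group G)"
begin

lemma H_lin: "c \<in> H \<Longrightarrow> c \<in> lin_chars G"
  using subgroup.subset[OF sub] by (auto simp: char_group_def)

lemma H_fin: "finite H"
  using subgroup.subset[OF sub] lin_chars_fin by (auto simp: char_group_def intro: finite_subset)

lemma H_principal: "principal_char G \<in> H"
  using subgroup.one_closed[OF sub] by (simp add: char_group_def)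

lemma H_mult: "c \<in> H \<Longrightarrow> d \<in> H \<Longrightarrow> (\<lambda>x. c x * d x) \<in> H"
  using subgroup.m_closed[OF sub, of c d] by (simp add: char_group_def)

lemma H_cpow: "c \<in> H \<Longrightarrow> cpow G c n \<in> H"
  by (induction n) (simp_all add: cpow_0 H_principal cpow_Suc H_lin H_mult)

lemma sum_H_zero:
  assumes g: "g \<in> carrier G" and eta: "\<eta> \<in> H" "\<eta> g \<noteq> 1"
  shows "(\<Sum>\<xi>\<in>H. \<xi> g) = 0"
proof -
  define f where "f = (\<lambda>\<xi> x. \<eta> x * \<xi> x)"
  have sub': "f ` H \<subseteq> H" unfolding f_def using eta H_mult by auto
  have inj: "inj_on f H"
  proof (rule inj_onI)
    fix a b assume a: "a \<in> H" and b: "b \<in> H" and e: "f a = f b"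
    show "a = b"
    proof
      fix x show "a x = b x"
      proof (cases "x \<in> carrier G")
        case True
        have "\<eta> x * a x = \<eta> x * b x" using e unfolding f_def by metis
        then show ?thesis using ch_nz[OF H_lin[OF eta(1)] True] by simp
      next
        case False then show ?thesis using ch_out[OF H_lin[OF a] False] ch_out[OF H_lin[OF b] False] by simp
      qed
    qed
  qed
  have img: "f ` H = H" using endo_inj_surj[OF H_fin sub' inj] .
  have "(\<Sum>\<xi>\<in>H. \<xi> g) = (\<Sum>\<xi>\<in>f ` H. \<xi> g)" using img by simp
  also have "\<dots> = (\<Sum>\<xi>\<in>H. f \<xi> g)" using inj by (simp add: sum.reindex)
  also have "\<dots> = \<eta> g * (\<Sum>\<xi>\<in>H. \<xi> g)" by (simp add: f_def sum_distrib_left)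
  finally have "(1 - \<eta> g) * (\<Sum>\<xi>\<in>H. \<xi> g) = 0" by (simp add: algebra_simps)
  then show ?thesis using eta(2) by simp
qed

end



locale pds = fgrp_sub G H for G (structure) and H +
  fixes D :: "'a set" and v k lam mu s :: nat
  assumes pds: "is_PDS G D v k lam mu" and reg: "regular_PDS G D"
    and sq: "int s ^ 2 = pds_Delta k lam mu"
begin

definition "lm = int lam - int mu"
definition "T1 = (lm + int s) div 2"
definition "T2 = (lm - int s) div 2"

lemma D_sub: "D \<subseteq> carrier G" using pds by (simp add: is_PDS_def)
lemma D_fin: "finite D" using D_sub fin finite_subset by blast
lemma card_D: "card D = k" using pds by (simp add: is_PDS_def)
lemma one_notin: "\<one> \<notin> D" using reg by (simp add: regular_PDS_def)
lemma D_inv: "(\<lambda>d. inv d) ` D = D" using reg by (simp add: regular_PDS_def)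
lemma reps_D: "g \<in> D \<Longrightarrow> pds_reps G D g = lam" using pds one_notin by (auto simp: is_PDS_def)
lemma reps_nD: "g \<in> carrier G \<Longrightarrow> g \<notin> D \<Longrightarrow> g \<noteq> \<one> \<Longrightarrow> pds_reps G D g = mu"
  using pds by (auto simp: is_PDS_def)

lemma sq': "int s ^ 2 = lm ^ 2 + 4 * (int k - int mu)"
  using sq by (simp add: pds_Delta_def lm_def)

lemma parity: "even (lm + int s)"
proof -
  have "(int s + lm) * (int s - lm) = 4 * (int k - int mu)"
    using sq' by (simp add: algebra_simps power2_eq_square)
  then have "even ((int s + lm) * (int s - lm))" by simp
  then have "even (int s + lm) \<or> even (int s - lm)" by simp
  then show ?thesis by presburger
qed

lemma T1: "2 * T1 = lm + int s" unfolding T1_def using parity by simp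
lemma T2: "2 * T2 = lm - int s" unfolding T2_def using parity by presburger
lemma T12: "T1 - T2 = int s" using T1 T2 by simp

lemma reps_one: "pds_reps G D \<one> = k"
proof -
  have "{(x, y). x \<in> D \<and> y \<in> D \<and> x \<otimes> inv y = \<one>} = (\<lambda>x. (x, x)) ` D"
  proof (safe)
    fix x y assume "x \<in> D" "y \<in> D" "x \<otimes> inv y = \<one>"
    then show "(x, y) \<in> (\<lambda>x. (x, x)) ` D" using D_sub by (auto simp: inv_equality[symmetric] dest!: inv_equality)
  next
    fix x assume "x \<in> D" then show "x \<otimes> inv x = \<one>" using D_sub by auto
  qed
  moreover have "card ((\<lambda>x. (x, x)) ` D) = card D" by (rule card_image) (auto simp: inj_on_def)
  ultimately show ?thesis unfolding pds_reps_def using card_D by simp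
qed

definition "val c = char_sum c D"

lemma val_principal: "val (principal_char G) = of_nat k"
  using D_sub card_D by (simp add: val_def char_sum_def principal_char_def subset_iff)

lemma sum_inv: assumes c: "c \<in> lin_chars G" shows "(\<Sum>y\<in>D. c (inv y)) = val c"
proof -
  have inj: "inj_on (\<lambda>d. inv d) D" using D_sub unfolding inj_on_def by (metis in_mono inv_inv)
  have "val c = (\<Sum>y\<in>(\<lambda>d. inv d) ` D. c y)" unfolding val_def char_sum_def using D_inv by simp
  also have "\<dots> = (\<Sum>y\<in>D. c (inv y))" using inj by (simp add: sum.reindex)
  finally show ?thesis by simp
qed

lemma val_sq:
  assumes c: "c \<in> lin_chars G" and np: "c \<noteq> principal_char G"
  shows "val c ^ 2 = of_int lm * val c + (of_nat k - of_nat mu)"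
proof -
  let ?g = "\<lambda>p. fst p \<otimes> inv (snd p)"
  have fin2: "finite (D \<times> D)" using D_fin by simp
  have "val c ^ 2 = (\<Sum>x\<in>D. c x) * (\<Sum>y\<in>D. c (inv y))"
    using sum_inv[OF c] by (simp add: power2_eq_square val_def char_sum_def)
  also have "\<dots> = (\<Sum>x\<in>D. \<Sum>y\<in>D. c x * c (inv y))" by (simp add: sum_product)
  also have "\<dots> = (\<Sum>x\<in>D. \<Sum>y\<in>D. c (x \<otimes> inv y))"
  proof (intro sum.cong refl)
    fix x y assume "x \<in> D" "y \<in> D"
    then have "x \<in> carrier G" "y \<in> carrier G" using D_sub by auto
    then show "c x * c (inv y) = c (x \<otimes> inv y)" by (simp add: ch_mult[OF c])
  qed
  also have "\<dots> = (\<Sum>p\<in>D \<times> D. c (?g p))" by (simp add: sum.cartesian_product split_def)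
  also have "\<dots> = (\<Sum>g\<in>carrier G. \<Sum>p\<in>{p \<in> D \<times> D. ?g p = g}. c (?g p))"
    using D_sub by (intro sum.group[symmetric] fin2 fin) (auto simp: subset_iff)
  also have "\<dots> = (\<Sum>g\<in>carrier G. of_nat (pds_reps G D g) * c g)"
  proof (intro sum.cong refl)
    fix g assume "g \<in> carrier G"
    have e: "{p \<in> D \<times> D. ?g p = g} = {(x, y). x \<in> D \<and> y \<in> D \<and> x \<otimes> inv y = g}" by auto
    have "(\<Sum>p\<in>{p \<in> D \<times> D. ?g p = g}. c (?g p)) = (\<Sum>p\<in>{p \<in> D \<times> D. ?g p = g}. c g)"
      by (rule sum.cong) auto
    also have "\<dots> = of_nat (pds_reps G D g) * c g" unfolding pds_reps_def e[symmetric] by simp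
    finally show "(\<Sum>p\<in>{p \<in> D \<times> D. ?g p = g}. c (?g p)) = of_nat (pds_reps G D g) * c g" .
  qed
  also have "\<dots> = of_nat k + of_nat lam * val c + of_nat mu * (- val c - 1)"
  proof -
    let ?f = "\<lambda>g. of_nat (pds_reps G D g) * c g"
    have s1: "(\<Sum>g\<in>carrier G. ?f g) = ?f \<one> + (\<Sum>g\<in>carrier G - {\<one>}. ?f g)"
      by (rule sum.remove[OF fin one_closed])
    have Dsub: "D \<subseteq> carrier G - {\<one>}" using D_sub one_notin by auto
    have s2: "(\<Sum>g\<in>carrier G - {\<one>}. ?f g) = (\<Sum>g\<in>D. ?f g) + (\<Sum>g\<in>carrier G - {\<one>} - D. ?f g)"
      using fin Dsub by (simp add: sum.subset_diff)
    have s3: "(\<Sum>g\<in>D. ?f g) = of_nat lam * val c"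
      by (simp add: reps_D val_def char_sum_def sum_distrib_left)
    have s4: "(\<Sum>g\<in>carrier G - {\<one>} - D. ?f g) = of_nat mu * (\<Sum>g\<in>carrier G - {\<one>} - D. c g)"
      by (simp add: reps_nD sum_distrib_left)
    have t1: "(\<Sum>g\<in>carrier G. c g) = c \<one> + (\<Sum>g\<in>carrier G - {\<one>}. c g)"
      by (rule sum.remove[OF fin one_closed])
    have t2: "(\<Sum>g\<in>carrier G - {\<one>}. c g) = (\<Sum>g\<in>D. c g) + (\<Sum>g\<in>carrier G - {\<one>} - D. c g)"
      using fin Dsub by (simp add: sum.subset_diff)
    have "(1 + val c) + (\<Sum>g\<in>carrier G - {\<one>} - D. c g) = 0"
      using t1 t2 sum_G_zero[OF c np] ch_one[OF c] unfolding val_def char_sum_def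
      by (simp only: add.assoc)
    then have X: "(\<Sum>g\<in>carrier G - {\<one>} - D. c g) = - val c - 1"
      by (simp only: add_eq_0_iff minus_add_distrib) (simp add: algebra_simps)
    have "(\<Sum>g\<in>carrier G. ?f g) = of_nat k * 1 + (of_nat lam * val c + of_nat mu * (- val c - 1))"
      by (simp only: s1 s2 s3 s4 X reps_one ch_one[OF c])
    then show ?thesis by simp
  qed
  finally show ?thesis by (simp add: algebra_simps lm_def)
qed

lemma val_np:
  assumes c: "c \<in> lin_chars G" and np: "c \<noteq> principal_char G"
  shows "val c = of_int T1 \<or> val c = of_int T2"
proof -
  have e1: "(of_int (int s) :: complex) ^ 2 = of_int lm ^ 2 + 4 * (of_nat k - of_nat mu)"
  proof -
    have "(of_int (int s) :: complex) ^ 2 = of_int (lm ^ 2 + 4 * (int k - int mu))"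
      using sq' by (metis of_int_power)
    then show ?thesis by simp
  qed
  have "(2 * val c - of_int lm) ^ 2 = 4 * val c ^ 2 - 4 * of_int lm * val c + of_int lm ^ 2"
    by (simp add: power2_eq_square algebra_simps)
  also have "\<dots> = 4 * (of_int lm * val c + (of_nat k - of_nat mu)) - 4 * of_int lm * val c + of_int lm ^ 2"
    by (simp only: val_sq[OF c np])
  also have "\<dots> = of_int lm ^ 2 + 4 * (of_nat k - of_nat mu)" by (simp add: algebra_simps)
  also have "\<dots> = (of_int (int s)) ^ 2" using e1 by simp
  finally have "(2 * val c - of_int lm) ^ 2 = (of_int (int s)) ^ 2" .
  then have "(2 * val c - of_int (lm + int s)) * (2 * val c - of_int (lm - int s)) = 0"
    by (simp add: algebra_simps power2_eq_square)
  then have "2 * val c = of_int (lm + int s) \<or> 2 * val c = of_int (lm - int s)"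
    by (simp only: mult_eq_0_iff right_minus_eq)
  then have "2 * val c = 2 * of_int T1 \<or> 2 * val c = 2 * of_int T2"
    using T1 T2 by (metis of_int_mult of_int_numeral)
  then show ?thesis by simp
qed

definition "vint c = (if val c = of_int T1 then T1 else if val c = of_int T2 then T2 else int k)"

lemma vint_eq: "c \<in> lin_chars G \<Longrightarrow> val c = of_int (vint c)"
  using val_np[of c] val_principal unfolding vint_def by (cases "c = principal_char G") auto

lemma vint_np: "c \<in> lin_chars G \<Longrightarrow> c \<noteq> principal_char G \<Longrightarrow> vint c = T1 \<or> vint c = T2"
  using val_np[of c] unfolding vint_def by auto

lemma vint_principal: "vint (principal_char G) = int k"
  using vint_eq[OF principal_lin] val_principal by (metis of_int_eq_iff of_int_of_nat_eq)

lemma frob_cong: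
  assumes c: "c \<in> lin_chars G" and p: "Factorial_Ring.prime (p::nat)"
  shows "[vint c = vint (cpow G c p)] (mod int p)"
proof -
  obtain r where r: "r \<in> zspan UU" "(\<Sum>d\<in>D. c d) ^ p - (\<Sum>d\<in>D. c d ^ p) = of_nat p * r"
    using frob_sum[OF UU_mult UU_one p D_fin, of c] ch_UU[OF c] D_sub zs_base by blast
  have "(\<Sum>d\<in>D. c d ^ p) = val (cpow G c p)"
    unfolding val_def char_sum_def cpow_def using D_sub by (intro sum.cong) auto
  moreover have "(\<Sum>d\<in>D. c d) = of_int (vint c)" using vint_eq[OF c] by (simp add: val_def char_sum_def)
  ultimately have "of_int (vint c ^ p - vint (cpow G c p)) = of_int (int p) * r"
    using r(2) vint_eq[OF cpow_lin[OF c]] by simp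
  then have "int p dvd vint c ^ p - vint (cpow G c p)"
    using zspan_div_int[OF UU_fin UU_one UU_mult r(1)] p prime_gt_0_nat by force
  then have "[vint c ^ p = vint (cpow G c p)] (mod int p)" by (simp add: cong_iff_dvd_diff)
  moreover have "[vint c ^ p = vint c] (mod int p)" by (rule fermat_int[OF p])
  ultimately show ?thesis by (meson cong_sym cong_trans)
qed

lemma sep:
  assumes "A = T1 \<or> A = T2" "B = T1 \<or> B = T2" "[A = B] (mod q)" "\<not> q dvd int s"
  shows "A = B"
proof (rule ccontr)
  assume "A \<noteq> B"
  then have "A - B = int s \<or> B - A = int s" using assms(1,2) T12 by auto
  moreover have "q dvd A - B" using assms(3) by (simp add: cong_iff_dvd_diff)
  ultimately show False using assms(4) by (metis dvd_minus_iff minus_diff_eq)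
qed

end



context fgrp begin
lemma cpow_principal: "cpow G (principal_char G) n = principal_char G"
  by (simp add: cpow_def principal_char_def fun_eq_iff)
end

locale pds_cop = pds +
  assumes cop: "\<forall>\<xi>\<in>H. coprime (char_ord G \<xi>) s"
begin

lemma prime_not_dvd_s:
  assumes c: "c \<in> H" and p: "Factorial_Ring.prime p" and d: "p dvd char_ord G c"
  shows "\<not> int p dvd int s"
proof
  assume "int p dvd int s"
  then have ps: "p dvd s" by simp
  obtain r where "char_ord G c = p * r" using d by auto
  then have "coprime p s" using cop c by (auto simp: coprime_mult_left_iff)
  then have "is_unit p" using ps coprime_common_divisor dvd_refl by blast
  then show False using p by simp
qed

lemma claim_aux:
  "\<forall>c p. char_ord G c = m \<longrightarrow> c \<in> H \<longrightarrow> Factorial_Ring.prime p \<longrightarrow> p dvd m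
     \<longrightarrow> [vint c = int k] (mod int p)"
proof (induction m rule: less_induct)
  case (less m)
  show ?case
  proof (intro allI impI)
    fix c p assume om: "char_ord G c = m" and cH: "c \<in> H" and p: "Factorial_Ring.prime p" and pm: "p dvd m"
    have cl: "c \<in> lin_chars G" using cH H_lin by blast
    have m0: "m > 0" using ord_props(1)[OF cl] om by simp
    have p1: "p > 1" using p prime_gt_1_nat by blast
    define c' where "c' = cpow G c p"
    have c'H: "c' \<in> H" unfolding c'_def using H_cpow[OF cH] .
    have oc': "char_ord G c' = m div p" unfolding c'_def using ord_cpow[OF cl] om pm p1 by simp
    have lt: "m div p < m" using m0 p1 by simp
    have F: "[vint c = vint c'] (mod int p)" unfolding c'_def by (rule frob_cong[OF cl p])
    have m1: "m \<noteq> 1" using pm p1 by auto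
    consider (a) "p dvd m div p" | (b) "m div p = 1" | (c) "\<not> p dvd m div p" "m div p \<noteq> 1" by blast
    then show "[vint c = int k] (mod int p)"
    proof cases
      case a
      have "[vint c' = int k] (mod int p)" using less[OF lt] c'H p a oc' by blast
      then show ?thesis using F cong_trans by blast
    next
      case b
      then have "c' = principal_char G" using ord1_iff[OF H_lin[OF c'H]] oc' by simp
      then show ?thesis using F vint_principal by simp
    next
      case c
      obtain q where q: "Factorial_Ring.prime q" "q dvd m div p" using prime_factor_nat[OF c(2)] by blast
      have qp: "q \<noteq> p" using q c(1) by auto
      have "m div p dvd m"
      proof -
        from pm obtain t where t: "m = p * t" by (auto elim: dvdE)
        then have "m div p = t" using p1 by simp
        then show ?thesis using t by simp
      qed
      then have qm: "q dvd m" using dvd_trans[OF q(2)] by blast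
      have q1: "q > 1" using q(1) prime_gt_1_nat by blast
      define c'' where "c'' = cpow G c q"
      have c''H: "c'' \<in> H" unfolding c''_def using H_cpow[OF cH] .
      have oc'': "char_ord G c'' = m div q" unfolding c''_def using ord_cpow[OF cl] om qm q1 by simp
      have lt2: "m div q < m" using m0 q1 by simp
      have pq: "p dvd m div q"
      proof -
        have "m = q * (m div q)" using qm by simp
        then have "p dvd q * (m div q)" using pm by simp
        then have "p dvd q \<or> p dvd m div q" using p prime_dvd_mult_iff by blast
        moreover have "\<not> p dvd q" using primes_dvd_imp_eq[OF p q(1)] qp by auto
        ultimately show ?thesis by blast
      qed
      have IH: "[vint c'' = int k] (mod int p)" using less[OF lt2] c''H p pq oc'' by blast
      have F2: "[vint c = vint c''] (mod int q)" unfolding c''_def by (rule frob_cong[OF cl q(1)])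
      have np1: "c \<noteq> principal_char G" using ord1_iff[OF cl] om m1 by simp
      have np2: "c'' \<noteq> principal_char G" using ord1_iff[OF H_lin[OF c''H]] oc'' pq p1 by auto
      have ns: "\<not> int q dvd int s" using prime_not_dvd_s[OF cH q(1)] qm om by simp
      have "vint c = vint c''"
        by (rule sep[OF vint_np[OF cl np1] vint_np[OF H_lin[OF c''H] np2] F2 ns])
      then show ?thesis using IH by simp
    qed
  qed
qed

lemma claim:
  "c \<in> H \<Longrightarrow> Factorial_Ring.prime p \<Longrightarrow> p dvd char_ord G c \<Longrightarrow> [vint c = int k] (mod int p)"
  using claim_aux by blast

lemma mix:
  assumes a: "\<alpha> \<in> H" and b: "\<beta> \<in> H" and oa: "char_ord G \<alpha> = p" and ob: "char_ord G \<beta> = q"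
    and p: "Factorial_Ring.prime p" and q: "Factorial_Ring.prime q" and pq: "p \<noteq> q"
    and ns: "\<not> int p dvd int s"
  shows "(\<lambda>x. \<alpha> x * \<beta> x) \<noteq> principal_char G \<and> [vint (\<lambda>x. \<alpha> x * \<beta> x) = int k] (mod int q)"
proof -
  define \<psi> where "\<psi> = (\<lambda>x. \<alpha> x * \<beta> x)"
  have al: "\<alpha> \<in> lin_chars G" "\<beta> \<in> lin_chars G" using a b H_lin by auto
  have \<psi>H: "\<psi> \<in> H" unfolding \<psi>_def using H_mult[OF a b] .
  define \<gamma> where "\<gamma> = cpow G \<beta> p"
  have \<gamma>H: "\<gamma> \<in> H" unfolding \<gamma>_def using H_cpow[OF b] .
  have cp: "cpow G \<psi> p = \<gamma>"
  proof
    fix x show "cpow G \<psi> p x = \<gamma> x"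
    proof (cases "x \<in> carrier G")
      case True
      have "\<alpha> x ^ p = 1" using ord_props(2)[OF al(1)] oa True by simp
      then show ?thesis using True by (simp add: cpow_def \<psi>_def \<gamma>_def power_mult_distrib)
    next
      case False then show ?thesis by (simp add: cpow_def \<gamma>_def)
    qed
  qed
  have q0: "q > 0" using q prime_gt_0_nat by blast
  have qnp: "\<not> q dvd p" using primes_dvd_imp_eq[OF q p] pq by auto
  have og: "char_ord G \<gamma> = q" unfolding \<gamma>_def
  proof (rule ord_eqI[OF cpow_lin[OF al(2)] q0])
    fix n
    have "(\<forall>x\<in>carrier G. cpow G \<beta> p x ^ n = 1) \<longleftrightarrow> (\<forall>x\<in>carrier G. \<beta> x ^ (p * n) = 1)"
      by (simp add: cpow_def power_mult)
    also have "\<dots> \<longleftrightarrow> q dvd p * n" using ord_dvd_iff[OF al(2)] ob by simp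
    also have "\<dots> \<longleftrightarrow> q dvd n" using q qnp prime_dvd_mult_iff by blast
    finally show "(\<forall>x\<in>carrier G. cpow G \<beta> p x ^ n = 1) \<longleftrightarrow> q dvd n" .
  qed
  have q1: "q \<noteq> 1" using q by auto
  have gl: "\<gamma> \<in> lin_chars G" using \<gamma>H H_lin by blast
  have gnp: "\<gamma> \<noteq> principal_char G" using ord1_iff[OF gl] og q1 by simp
  have pnp: "\<psi> \<noteq> principal_char G"
  proof
    assume "\<psi> = principal_char G"
    then have "\<gamma> = principal_char G" using cp cpow_principal by simp
    then show False using gnp by simp
  qed
  have K: "[vint \<gamma> = int k] (mod int q)" using claim[OF \<gamma>H q] og by simp
  have pl: "\<psi> \<in> lin_chars G" using \<psi>H H_lin by blast
  have F: "[vint \<psi> = vint \<gamma>] (mod int p)" using frob_cong[OF pl p] cp by simp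
  have "vint \<psi> = vint \<gamma>" by (rule sep[OF vint_np[OF pl pnp] vint_np[OF gl gnp] F ns])
  then show ?thesis using pnp K unfolding \<psi>_def by simp
qed

lemma ord_div:
  assumes c: "c \<in> lin_chars G" and p: "Factorial_Ring.prime p" and d: "p dvd char_ord G c"
  shows "char_ord G (cpow G c (char_ord G c div p)) = p"
proof -
  obtain r where r: "char_ord G c = p * r" using d by auto
  have r0: "r > 0" using ord_props(1)[OF c] r by (cases r) auto
  have p0: "p > 0" using p prime_gt_0_nat by blast
  have e: "char_ord G c div p = r" using r p0 by simp
  have "char_ord G (cpow G c r) = char_ord G c div r" using ord_cpow[OF c, of r] r r0 by simp
  then show ?thesis using e r r0 by simp
qed

lemma const:
  assumes c1: "c1 \<in> H" "c1 \<noteq> principal_char G" and c2: "c2 \<in> H" "c2 \<noteq> principal_char G"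
  shows "vint c1 = vint c2"
proof -
  have l1: "c1 \<in> lin_chars G" and l2: "c2 \<in> lin_chars G" using c1 c2 H_lin by auto
  obtain p where p: "Factorial_Ring.prime p" "p dvd char_ord G c1"
    using prime_factor_nat[of "char_ord G c1"] ord1_iff[OF l1] c1(2) by auto
  obtain q where q: "Factorial_Ring.prime q" "q dvd char_ord G c2"
    using prime_factor_nat[of "char_ord G c2"] ord1_iff[OF l2] c2(2) by auto
  have k1: "[vint c1 = int k] (mod int p)" using claim[OF c1(1) p] .
  have k2: "[vint c2 = int k] (mod int q)" using claim[OF c2(1) q] .
  have ns1: "\<not> int p dvd int s" using prime_not_dvd_s[OF c1(1) p] .
  have ns2: "\<not> int q dvd int s" using prime_not_dvd_s[OF c2(1) q] .
  show ?thesis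
  proof (cases "p = q")
    case True
    have "[vint c1 = vint c2] (mod int p)" using k1 k2 True by (meson cong_sym cong_trans)
    then show ?thesis by (rule sep[OF vint_np[OF l1 c1(2)] vint_np[OF l2 c2(2)] _ ns1])
  next
    case False
    define \<alpha> where "\<alpha> = cpow G c1 (char_ord G c1 div p)"
    define \<beta> where "\<beta> = cpow G c2 (char_ord G c2 div q)"
    have aH: "\<alpha> \<in> H" unfolding \<alpha>_def using H_cpow[OF c1(1)] .
    have bH: "\<beta> \<in> H" unfolding \<beta>_def using H_cpow[OF c2(1)] .
    have oa: "char_ord G \<alpha> = p" unfolding \<alpha>_def using ord_div[OF l1 p] .
    have ob: "char_ord G \<beta> = q" unfolding \<beta>_def using ord_div[OF l2 q] .
    define \<psi> where "\<psi> = (\<lambda>x. \<alpha> x * \<beta> x)"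
    have m1: "\<psi> \<noteq> principal_char G" "[vint \<psi> = int k] (mod int q)"
      using mix[OF aH bH oa ob p(1) q(1) False ns1] unfolding \<psi>_def by auto
    have e: "(\<lambda>x. \<beta> x * \<alpha> x) = \<psi>" unfolding \<psi>_def by (simp add: mult.commute)
    have m2: "[vint \<psi> = int k] (mod int p)"
      using mix[OF bH aH ob oa q(1) p(1) _ ns2] False e by auto
    have pl: "\<psi> \<in> lin_chars G" unfolding \<psi>_def using H_mult[OF aH bH] H_lin by blast
    have "[vint c1 = vint \<psi>] (mod int p)" using k1 m2 by (meson cong_sym cong_trans)
    then have e1: "vint c1 = vint \<psi>" by (rule sep[OF vint_np[OF l1 c1(2)] vint_np[OF pl m1(1)] _ ns1])
    have "[vint c2 = vint \<psi>] (mod int q)" using k2 m1(2) by (meson cong_sym cong_trans)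
    then have e2: "vint c2 = vint \<psi>" by (rule sep[OF vint_np[OF l2 c2(2)] vint_np[OF pl m1(1)] _ ns2])
    show ?thesis using e1 e2 by simp
  qed
qed

end



context pds_cop begin

lemma main_count:
  assumes a: "a \<in> carrier G - {g \<in> carrier G. \<forall>\<xi> \<in> H. \<xi> g = 1}"
    and xi: "\<xi> \<in> H" "\<xi> \<noteq> principal_char G"
  shows "of_nat (card (({g \<in> carrier G. \<forall>\<xi> \<in> H. \<xi> g = 1} #> a) \<inter> D))
           = (of_nat k - char_sum \<xi> D) / of_nat (card H)"
proof -
  define N where "N = {g \<in> carrier G. \<forall>\<xi> \<in> H. \<xi> g = 1}"
  define \<theta> where "\<theta> = char_sum \<xi> D"
  have aG: "a \<in> carrier G" using a by auto
  define ia where "ia = inv a"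
  have iaG: "ia \<in> carrier G" unfolding ia_def using aG by simp
  have "\<exists>\<eta>\<in>H. \<eta> ia \<noteq> 1"
  proof (rule ccontr)
    assume na: "\<not> (\<exists>\<eta>\<in>H. \<eta> ia \<noteq> 1)"
    have "\<forall>\<eta>\<in>H. \<eta> a = 1"
    proof
      fix \<eta> assume e: "\<eta> \<in> H"
      then have "\<eta> ia = 1" using na by auto
      moreover have "\<eta> ia * \<eta> a = 1" using ch_inv[OF H_lin[OF e] aG] unfolding ia_def .
      ultimately show "\<eta> a = 1" by simp
    qed
    then show False using a by auto
  qed
  then obtain \<eta> where eta: "\<eta> \<in> H" "\<eta> ia \<noteq> 1" by blast
  have S0: "(\<Sum>\<xi>\<in>H. \<xi> ia) = 0" by (rule sum_H_zero[OF iaG eta])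
  have ind: "(\<Sum>\<xi>\<in>H. \<xi> g) = (if g \<in> N then of_nat (card H) else 0)" if g: "g \<in> carrier G" for g
  proof (cases "g \<in> N")
    case True
    then have "(\<Sum>\<xi>\<in>H. \<xi> g) = (\<Sum>\<xi>\<in>H. 1)" unfolding N_def by (intro sum.cong) auto
    then show ?thesis using True by simp
  next
    case False
    then obtain \<eta> where "\<eta> \<in> H" "\<eta> g \<noteq> 1" using g unfolding N_def by auto
    then show ?thesis using sum_H_zero[OF g] False by simp
  qed
  have coset: "(N #> a) \<inter> D = {d \<in> D. d \<otimes> ia \<in> N}"
  proof safe
    fix d assume "d \<in> N #> a" "d \<in> D"
    then obtain n where n: "n \<in> N" "d = n \<otimes> a" unfolding r_coset_def by auto
    have nG: "n \<in> carrier G" using n(1) unfolding N_def by auto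
    have "d \<otimes> ia = n" unfolding n(2) ia_def using nG aG by (simp add: m_assoc)
    then show "d \<otimes> ia \<in> N" using n(1) by simp
  next
    fix d assume d: "d \<in> D" "d \<otimes> ia \<in> N"
    have dG: "d \<in> carrier G" using d D_sub by auto
    have "(d \<otimes> ia) \<otimes> a = d" unfolding ia_def using dG aG by (simp add: m_assoc)
    then show "d \<in> N #> a" using d(2) unfolding r_coset_def by force
  qed
  have vals: "\<xi>' ia * val \<xi>' = \<xi>' ia * \<theta> + (if \<xi>' = principal_char G then of_nat k - \<theta> else 0)"
    if x: "\<xi>' \<in> H" for \<xi>'
  proof (cases "\<xi>' = principal_char G")
    case True
    then show ?thesis using val_principal iaG by (simp add: principal_char_def)
  next
    case False
    have "vint \<xi>' = vint \<xi>" by (rule const[OF x False xi])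
    then have "val \<xi>' = \<theta>" using vint_eq[OF H_lin[OF x]] vint_eq[OF H_lin[OF xi(1)]] unfolding \<theta>_def val_def
      by simp
    then show ?thesis using False by simp
  qed
  have "of_nat (card H) * of_nat (card {d \<in> D. d \<otimes> ia \<in> N}) = (\<Sum>d\<in>D. (if d \<otimes> ia \<in> N then of_nat (card H) else (0::complex)))"
    using D_fin by (simp add: sum.inter_filter[symmetric])
  also have "\<dots> = (\<Sum>d\<in>D. \<Sum>\<xi>\<in>H. \<xi> (d \<otimes> ia))"
    using D_sub iaG by (intro sum.cong refl) (simp add: ind subset_iff)
  also have "\<dots> = (\<Sum>d\<in>D. \<Sum>\<xi>\<in>H. \<xi> ia * \<xi> d)"
  proof (intro sum.cong refl)
    fix d \<xi>' assume "d \<in> D" "\<xi>' \<in> H"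
    then show "\<xi>' (d \<otimes> ia) = \<xi>' ia * \<xi>' d" using D_sub iaG ch_mult[OF H_lin] by (auto simp: mult.commute)
  qed
  also have "\<dots> = (\<Sum>\<xi>\<in>H. \<xi> ia * val \<xi>)"
    by (subst sum.swap) (simp add: val_def char_sum_def sum_distrib_left)
  also have "\<dots> = (\<Sum>\<xi>\<in>H. \<xi> ia * \<theta> + (if \<xi> = principal_char G then of_nat k - \<theta> else 0))"
    using vals by (intro sum.cong) auto
  also have "\<dots> = \<theta> * (\<Sum>\<xi>\<in>H. \<xi> ia) + (of_nat k - \<theta>)"
    using H_fin H_principal by (simp add: sum.distrib sum_distrib_left mult.commute)
  also have "\<dots> = of_nat k - \<theta>" using S0 by simp
  finally have eq: "of_nat (card H) * of_nat (card {d \<in> D. d \<otimes> ia \<in> N}) = of_nat k - \<theta>" .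
  have cH: "card H > 0" using H_fin H_principal card_gt_0_iff by blast
  then show ?thesis using eq unfolding N_def[symmetric] \<theta>_def[symmetric] coset
    by (simp add: field_simps)
qed

end

theorem mainTheorem13:
  fixes G :: "('a, 'b) monoid_scheme" and D :: "'a set"
    and v k lam mu s :: nat and H :: "('a \<Rightarrow> complex) set"
  assumes "group G" and "finite (carrier G)"
    and "is_PDS G D v k lam mu" and "regular_PDS G D"
    and "0 < mu" and "mu < k"
    and "int s ^ 2 = pds_Delta k lam mu"
    and "subgroup H (char_group G)"
    and "H \<noteq> {principal_char G}"
    and "\<forall>\<xi> \<in> H. coprime (char_ord G \<xi>) s"
  shows "\<forall>a \<in> carrier G - {g \<in> carrier G. \<forall>\<xi> \<in> H. \<xi> g = 1}.
           \<forall>\<xi> \<in> H. \<xi> \<noteq> principal_char G \<longrightarrow>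
             of_nat (card (({g \<in> carrier G. \<forall>\<xi> \<in> H. \<xi> g = 1} #>\<^bsub>G\<^esub> a) \<inter> D))
               = (of_nat k - char_sum \<xi> D) / of_nat (card H)"
proof -
  interpret P: pds_cop G H D v k lam mu s
    using assms by (simp add: pds_cop_def pds_def pds_axioms_def fgrp_sub_def fgrp_sub_axioms_def
        fgrp_def fgrp_axioms_def pds_cop_axioms_def)
  show ?thesis using P.main_count by blast
qed

end
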